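(* Let $v$ be a typical weight, let $T$ be an intrinsic operator on $\mathcal{H}(\mathbb{D})$ and let $X$ be an initial space. (i) Let $T:X\to H_v$ be bounded and for $N\in\mathbb{N}$ let $D_N=\{z\in\mathbb{D}:\|T^*K_z^H\|>N\}$. If $\lim_{N\to\infty}\sup_{z\in D_N}v(z)\|T^*K_z^H\|=0$, then $T:X\to H_v$ is compact. (ii) Let $T:X\to\mathcal{B}_v$ be bounded and for $N\in\mathbb{N}$ let $D_N=\{z\in\mathbb{D}:\|T^*K_{z,1}^{\mathcal{B}}\|>N\}$. If $\lim_{N\to\infty}\sup_{z\in D_N}v(z)\|T^*K_{z,1}^{\mathcal{B}}\|=0$, then $T:X\to\mathcal{B}_v$ is compact.
   Context: $\mathcal{H}(\mathbb{D})$ is the space of holomorphic functions on the unit disk $\mathbb{D}$ with the topology $\tau_{uc}$ of uniform convergence on compact subsets. A linear operator $T$ on $\mathcal{H}(\mathbb{D})$ is intrinsic if it maps $\tau_{uc}$-convergent sequences to $\tau_{uc}$-convergent sequences. An initial space is a Banach space $X\subset\mathcal{H}(\mathbb{D})$ containing the polynomials such that every sequence in the closed unit ball of $X$ has a subsequence converging in $\tau_{uc}$ to some function in $X$. A typical weight is a continuous radial $v:\mathbb{D}\to(0,1]$, non-increasing in $|z|$, with $v(z)\to0$ as $|z|\to1$. $H_v=\{f:\sup_z v(z)|f(z)|<\infty\}$ with that supremum as norm; $\mathcal{B}_v=\{f:\sup_z v(z)|f'(z)|<\infty\}$ with norm $|f(0)|+\sup_z v(z)|f'(z)|$. $K_z^H$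 is the point evaluation $g\mapsto g(z)$ on $H_v$, $K_{z,1}^{\mathcal{B}}$ the derivative point evaluation $g\mapsto g'(z)$ on $\mathcal{B}_v$, and $T^*$ the adjoint of $T:X\to H_v$ (resp. $\mathcal{B}_v$). *)

theory Defs
  imports "HOL-Complex_Analysis.Complex_Analysis" "HOL-Computational_Algebra.Polynomial"
begin

text \<open>Convention: an element of H(D) is represented by a function complex => complex
  that is holomorphic on the open unit disk and vanishes outside it (so that
  functions are determined by their values on the disk).\<close>

abbreviation disk :: "complex set" where "disk \<equiv> ball 0 1"

definition Hol :: "(complex \<Rightarrow> complex) set" where
  "Hol = {f. f holomorphic_on disk \<and> (\<forall>z. z \<notin> disk \<longrightarrow> f z = 0)}"

definition uc_conv :: "(nat \<Rightarrow> complex \<Rightarrow> complex) \<Rightarrow> (complex \<Rightarrow> complex) \<Rightarrow> bool" where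
  "uc_conv fs f \<longleftrightarrow> (\<forall>K. compact K \<and> K \<subseteq> disk \<longrightarrow> uniform_limit K fs f sequentially)"

definition intrinsic :: "((complex \<Rightarrow> complex) \<Rightarrow> (complex \<Rightarrow> complex)) \<Rightarrow> bool" where
  "intrinsic T \<longleftrightarrow>
     (\<forall>f\<in>Hol. T f \<in> Hol) \<and>
     (\<forall>f\<in>Hol. \<forall>g\<in>Hol. T (\<lambda>z. f z + g z) = (\<lambda>z. T f z + T g z)) \<and>
     (\<forall>f\<in>Hol. \<forall>c. T (\<lambda>z. c * f z) = (\<lambda>z. c * T f z)) \<and>
     (\<forall>fs f. (\<forall>n. fs n \<in> Hol) \<and> f \<in> Hol \<and> uc_conv fs f \<longrightarrow>
        (\<exists>g\<in>Hol. uc_conv (\<lambda>n. T (fs n)) g))"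

definition typical_weight :: "(complex \<Rightarrow> real) \<Rightarrow> bool" where
  "typical_weight v \<longleftrightarrow>
     continuous_on disk v \<and>
     (\<forall>z\<in>disk. \<forall>w\<in>disk. cmod z = cmod w \<longrightarrow> v z = v w) \<and>
     (\<forall>z\<in>disk. 0 < v z \<and> v z \<le> 1) \<and>
     (\<forall>z\<in>disk. \<forall>w\<in>disk. cmod z \<le> cmod w \<longrightarrow> v w \<le> v z) \<and>
     (\<forall>e>0. \<exists>r<1. \<forall>z\<in>disk. r < cmod z \<longrightarrow> v z < e)"

definition initial_space :: "(complex \<Rightarrow> complex) set \<Rightarrow> ((complex \<Rightarrow> complex) \<Rightarrow> real) \<Rightarrow> bool" where
  "initial_space X nX \<longleftrightarrow>
     X \<subseteq> Hol \<and>
     (\<forall>p. (\<lambda>z. if z \<in> disk then poly (p :: complex poly) z else (0::complex)) \<in> X) \<and>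
     (\<forall>f\<in>X. \<forall>g\<in>X. (\<lambda>z. f z + g z) \<in> X) \<and>
     (\<forall>f\<in>X. \<forall>c. (\<lambda>z. c * f z) \<in> X) \<and>
     (\<forall>f\<in>X. 0 \<le> nX f) \<and>
     (\<forall>f\<in>X. nX f = 0 \<longleftrightarrow> f = (\<lambda>z. 0)) \<and>
     (\<forall>f\<in>X. \<forall>c. nX (\<lambda>z. c * f z) = cmod c * nX f) \<and>
     (\<forall>f\<in>X. \<forall>g\<in>X. nX (\<lambda>z. f z + g z) \<le> nX f + nX g) \<and>
     (\<forall>fs. (\<forall>n. fs n \<in> X) \<and>
           (\<forall>e::real>0. \<exists>M::nat. \<forall>m\<ge>M. \<forall>n\<ge>M. nX (\<lambda>z. fs m z - fs n z) < e) \<longrightarrow>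
           (\<exists>f\<in>X. (\<lambda>n. nX (\<lambda>z. fs n z - f z)) \<longlonglongrightarrow> 0)) \<and>
     (\<forall>fs. (\<forall>n. fs n \<in> X \<and> nX (fs n) \<le> 1) \<longrightarrow>
           (\<exists>(r::nat\<Rightarrow>nat) g. strict_mono r \<and> g \<in> X \<and> uc_conv (fs \<circ> r) g))"

definition Hv :: "(complex \<Rightarrow> real) \<Rightarrow> (complex \<Rightarrow> complex) set" where
  "Hv v = {f\<in>Hol. bdd_above ((\<lambda>z. v z * cmod (f z)) ` disk)}"

definition normHv :: "(complex \<Rightarrow> real) \<Rightarrow> (complex \<Rightarrow> complex) \<Rightarrow> real" where
  "normHv v f = (SUP z\<in>disk. v z * cmod (f z))"

definition Bv :: "(complex \<Rightarrow> real) \<Rightarrow> (complex \<Rightarrow> complex) set" where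
  "Bv v = {f\<in>Hol. bdd_above ((\<lambda>z. v z * cmod (deriv f z)) ` disk)}"

definition normBv :: "(complex \<Rightarrow> real) \<Rightarrow> (complex \<Rightarrow> complex) \<Rightarrow> real" where
  "normBv v f = cmod (f 0) + (SUP z\<in>disk. v z * cmod (deriv f z))"

definition bounded_op :: "(complex \<Rightarrow> complex) set \<Rightarrow> ((complex \<Rightarrow> complex) \<Rightarrow> real)
     \<Rightarrow> (complex \<Rightarrow> complex) set \<Rightarrow> ((complex \<Rightarrow> complex) \<Rightarrow> real)
     \<Rightarrow> ((complex \<Rightarrow> complex) \<Rightarrow> (complex \<Rightarrow> complex)) \<Rightarrow> bool" where
  "bounded_op X nX Y nY T \<longleftrightarrow>
     (\<forall>f\<in>X. T f \<in> Y) \<and> (\<exists>C. \<forall>f\<in>X. nY (T f) \<le> C * nX f)"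

definition compact_op :: "(complex \<Rightarrow> complex) set \<Rightarrow> ((complex \<Rightarrow> complex) \<Rightarrow> real)
     \<Rightarrow> (complex \<Rightarrow> complex) set \<Rightarrow> ((complex \<Rightarrow> complex) \<Rightarrow> real)
     \<Rightarrow> ((complex \<Rightarrow> complex) \<Rightarrow> (complex \<Rightarrow> complex)) \<Rightarrow> bool" where
  "compact_op X nX Y nY T \<longleftrightarrow>
     (\<forall>fs. (\<forall>n. fs n \<in> X \<and> nX (fs n) \<le> 1) \<longrightarrow>
        (\<exists>(r::nat\<Rightarrow>nat) g. strict_mono r \<and> g \<in> Y \<and>
               (\<lambda>n. nY (\<lambda>z. T (fs (r n)) z - g z)) \<longlonglongrightarrow> 0))"

definition dual_norm :: "(complex \<Rightarrow> complex) set \<Rightarrow> ((complex \<Rightarrow> complex) \<Rightarrow> real)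
     \<Rightarrow> ((complex \<Rightarrow> complex) \<Rightarrow> complex) \<Rightarrow> real" where
  "dual_norm X nX phi = (SUP f\<in>{f\<in>X. nX f \<le> 1}. cmod (phi f))"

text \<open>T^* K_z^H : g |-> (T g)(z) and T^* K_{z,1}^B : g |-> (T g)'(z).\<close>
definition adj_eval_norm :: "(complex \<Rightarrow> complex) set \<Rightarrow> ((complex \<Rightarrow> complex) \<Rightarrow> real)
     \<Rightarrow> ((complex \<Rightarrow> complex) \<Rightarrow> (complex \<Rightarrow> complex)) \<Rightarrow> complex \<Rightarrow> real" where
  "adj_eval_norm X nX T z = dual_norm X nX (\<lambda>g. T g z)"

definition adj_deriv_eval_norm :: "(complex \<Rightarrow> complex) set \<Rightarrow> ((complex \<Rightarrow> complex) \<Rightarrow> real)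
     \<Rightarrow> ((complex \<Rightarrow> complex) \<Rightarrow> (complex \<Rightarrow> complex)) \<Rightarrow> complex \<Rightarrow> real" where
  "adj_deriv_eval_norm X nX T z = dual_norm X nX (\<lambda>g. deriv (T g) z)"

text \<open>sup over D_N = {z in D. a z > N} of v z * a z; the supremum over the empty set is 0.\<close>
definition sup_DN :: "(complex \<Rightarrow> real) \<Rightarrow> (complex \<Rightarrow> real) \<Rightarrow> nat \<Rightarrow> real" where
  "sup_DN v a N = Sup (insert 0 ((\<lambda>z. v z * a z) ` {z\<in>disk. a z > real N}))"

end

theory Submission
  imports Defs
begin



lemma zero_Hol: "(\<lambda>z. 0) \<in> Hol"
  unfolding Hol_def by auto

lemma intrinsic_T0: assumes "intrinsic T" shows "T (\<lambda>z. 0) = (\<lambda>z. 0)"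
proof -
  have "T (\<lambda>z. 0 * f z) = (\<lambda>z. 0 * T f z)" if "f \<in> Hol" for f
    using assms that unfolding intrinsic_def by blast
  from this[OF zero_Hol] show ?thesis by simp
qed

lemma intrinsic_zero:
  assumes T: "intrinsic T" and hs: "\<forall>n. hs n \<in> Hol" and uc: "uc_conv hs (\<lambda>z. 0)"
  shows "uc_conv (\<lambda>n. T (hs n)) (\<lambda>z. 0)"
proof -
  define s where "s k = (if even k then hs (k div 2) else (\<lambda>z. 0))" for k
  have sH: "\<forall>k. s k \<in> Hol" using hs zero_Hol by (auto simp: s_def)
  have "uc_conv s (\<lambda>z. 0)"
    unfolding uc_conv_def uniform_limit_sequentially_iff
  proof (intro allI impI)
    fix K :: "complex set" and e :: real
    assume K: "compact K \<and> K \<subseteq> disk" and e: "e > 0"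
    then obtain N where N: "\<forall>n\<ge>N. \<forall>x\<in>K. dist (hs n x) 0 < e"
      using uc unfolding uc_conv_def uniform_limit_sequentially_iff by blast
    show "\<exists>N. \<forall>n\<ge>N. \<forall>x\<in>K. dist (s n x) 0 < e"
    proof (intro exI[of _ "2*N"] allI impI ballI)
      fix k x assume "k \<ge> 2*N" "x \<in> K"
      thus "dist (s k x) 0 < e" using N e by (auto simp: s_def)
    qed
  qed
  then obtain H where "H \<in> Hol" and HT: "uc_conv (\<lambda>k. T (s k)) H"
    using T sH zero_Hol unfolding intrinsic_def by blast
  show ?thesis unfolding uc_conv_def uniform_limit_sequentially_iff
  proof (intro allI impI)
    fix K :: "complex set" and e :: real
    assume K: "compact K \<and> K \<subseteq> disk" and e: "e > 0"
    have Hdist: "\<forall>e>0. \<exists>N. \<forall>n\<ge>N. \<forall>x\<in>K. dist (T (s n) x) (H x) < e"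
      using HT K unfolding uc_conv_def uniform_limit_sequentially_iff by blast
    have H0: "H x = 0" if "x \<in> K" for x
    proof -
      have "cmod (H x) < d" if "d > 0" for d
      proof -
        obtain N where N: "\<forall>n\<ge>N. \<forall>x\<in>K. dist (T (s n) x) (H x) < d"
          using Hdist \<open>d>0\<close> by blast
        have "s (2*N+1) = (\<lambda>z. 0)" by (simp add: s_def)
        hence "dist (0::complex) (H x) < d" using N[rule_format, of "2*N+1" x] \<open>x\<in>K\<close>
          intrinsic_T0[OF T] by simp
        thus ?thesis by (simp add: dist_norm)
      qed
      hence "\<not> cmod (H x) > 0" by (metis less_irrefl)
      thus ?thesis by simp
    qed
    obtain N where N: "\<forall>n\<ge>N. \<forall>x\<in>K. dist (T (s n) x) (H x) < e"
      using Hdist e by blast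
    show "\<exists>N. \<forall>n\<ge>N. \<forall>x\<in>K. dist (T (hs n) x) 0 < e"
    proof (intro exI[of _ N] allI impI ballI)
      fix n x assume "n \<ge> N" "x \<in> K"
      hence "dist (T (s (2*n)) x) (H x) < e" using N by auto
      thus "dist (T (hs n) x) 0 < e" using H0[OF \<open>x\<in>K\<close>] by (simp add: s_def)
    qed
  qed
qed



lemma tail_lemma:
  fixes v a :: "complex \<Rightarrow> real" and \<Phi> :: "nat \<Rightarrow> complex \<Rightarrow> real" and m :: "nat \<Rightarrow> real"
  assumes vpos: "\<forall>z\<in>disk. 0 < v z \<and> v z \<le> 1"
    and vtail: "\<forall>e>0. \<exists>r<1. \<forall>z\<in>disk. r < cmod z \<longrightarrow> v z < e"
    and abd: "\<forall>z\<in>disk. v z * a z \<le> C"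
    and sup0: "(\<lambda>N. sup_DN v a N) \<longlonglongrightarrow> 0"
    and Phi0: "\<forall>n z. 0 \<le> \<Phi> n z"
    and mbd: "\<forall>n. 0 \<le> m n \<and> m n \<le> M"
    and Phia: "\<forall>n. \<forall>z\<in>disk. \<Phi> n z \<le> a z * m n"
    and inner: "\<forall>r. 0 \<le> r \<longrightarrow> r < 1 \<longrightarrow> (\<forall>e>0. \<exists>N. \<forall>n\<ge>N. \<forall>z. cmod z \<le> r \<longrightarrow> \<Phi> n z < e)"
  shows "(\<lambda>n. SUP z\<in>disk. v z * \<Phi> n z) \<longlonglongrightarrow> 0"
proof (rule LIMSEQ_I)
  fix e :: real assume e: "e > 0"
  define M' where "M' = M + 1"
  have M': "M' > 0" "\<forall>n. m n \<le> M'" using mbd by (auto simp: M'_def, smt (verit))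
  obtain N :: nat where N: "norm (sup_DN v a N - 0) < e / (2*M')"
    using LIMSEQ_D[OF sup0, of "e/(2*M')"] e M' by auto
  define \<delta> where "\<delta> = e / (2 * M' * (real N + 1))"
  have "\<delta> > 0" using e M' by (simp add: \<delta>_def)
  then obtain r0 where r0: "r0 < 1" "\<forall>z\<in>disk. r0 < cmod z \<longrightarrow> v z < \<delta>" using vtail by blast
  define r where "r = max r0 0"
  have r: "0 \<le> r" "r < 1" using r0 by (auto simp: r_def)
  obtain K where K: "\<forall>n\<ge>K. \<forall>z. cmod z \<le> r \<longrightarrow> \<Phi> n z < e/2"
    using inner r e by (meson half_gt_zero)
  show "\<exists>no. \<forall>n\<ge>no. norm ((SUP z\<in>disk. v z * \<Phi> n z) - 0) < e"
  proof (intro exI[of _ K] allI impI)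
    fix n assume n: "n \<ge> K"
    have bound: "v z * \<Phi> n z \<le> e/2" if z: "z \<in> disk" for z
    proof (cases "cmod z \<le> r")
      case True
      have "v z \<le> 1" "0 \<le> \<Phi> n z" using vpos z Phi0 by auto
      hence "v z * \<Phi> n z \<le> \<Phi> n z" using mult_right_mono[of "v z" 1 "\<Phi> n z"] by simp
      also have "\<dots> < e/2" using K n True by blast
      finally show ?thesis by simp
    next
      case False
      hence vz: "v z < \<delta>" using r0 z by (auto simp: r_def)
      have vz0: "0 < v z" using vpos z by blast
      have P: "v z * \<Phi> n z \<le> v z * a z * m n"
        using Phia z vz0 by (metis mult.assoc mult_le_cancel_left_pos)
      show ?thesis
      proof (cases "a z > real N")
        case True
        have bdd: "bdd_above (insert 0 ((\<lambda>z. v z * a z) ` {z\<in>disk. a z > real N}))"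
          using abd by (intro bdd_aboveI[of _ "max C 0"]) (auto simp: le_max_iff_disj)
        have "v z * a z \<le> sup_DN v a N" unfolding sup_DN_def
          by (rule cSup_upper[OF _ bdd]) (use z True in auto)
        moreover have "sup_DN v a N < e/(2*M')" using N by simp
        moreover have "v z * a z > 0" using True vz0
          by (smt (verit, ccfv_SIG) of_nat_0_le_iff mult_pos_pos)
        ultimately have "v z * a z * m n \<le> e/(2*M') * M'"
          using M' mbd by (intro mult_mono) auto
        also have "\<dots> = e/2" using M' by simp
        finally show ?thesis using P by linarith
      next
        case False
        have "v z * a z * m n \<le> v z * real N * m n"
          using False vz0 mbd by (intro mult_right_mono) auto
        also have "\<dots> \<le> \<delta> * real N * M'"
          using vz vz0 mbd M' by (intro mult_mono) auto
        also have "\<dots> \<le> e/2"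
        proof -
          have d: "\<delta> * (2*M'*(real N+1)) = e" using M' unfolding \<delta>_def by simp
          have "\<delta> * real N * M' * 2 \<le> \<delta> * (2*M'*(real N+1))"
            using \<open>\<delta>>0\<close> M' by (simp add: algebra_simps)
          thus ?thesis using d by linarith
        qed
        finally show ?thesis using P by linarith
      qed
    qed
    have ne: "disk \<noteq> {}" by (metis centre_in_ball empty_iff zero_less_one)
    have le: "(SUP z\<in>disk. v z * \<Phi> n z) \<le> e/2"
      using bound ne by (intro cSUP_least) auto
    have "v 0 * \<Phi> n 0 \<le> (SUP z\<in>disk. v z * \<Phi> n z)"
    proof (rule cSUP_upper)
      show "bdd_above ((\<lambda>z. v z * \<Phi> n z) ` disk)"
        using bound by (intro bdd_aboveI2[of _ _ "e/2"]) auto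
    qed simp
    moreover have "0 \<le> v 0 * \<Phi> n 0"
    proof -
      have "0 < v 0" "0 \<le> \<Phi> n 0" using vpos Phi0 by auto
      thus ?thesis by simp
    qed
    ultimately show "norm ((SUP z\<in>disk. v z * \<Phi> n z) - 0) < e"
      using le e by simp
  qed
qed



lemma zero_in_X: assumes "initial_space X nX" shows "(\<lambda>z. 0) \<in> X" "nX (\<lambda>z. 0) = 0"
proof -
  have "(\<lambda>z. if z \<in> disk then poly (0::complex poly) z else (0::complex)) \<in> X"
    using assms unfolding initial_space_def by blast
  moreover have "(\<lambda>z. if z \<in> disk then poly (0::complex poly) z else (0::complex)) = (\<lambda>z. 0)"
    by (rule ext) simp
  ultimately show X0: "(\<lambda>z. 0) \<in> X" by simp
  thus "nX (\<lambda>z. 0) = 0" using assms unfolding initial_space_def by blast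
qed

lemma dual_bound:
  assumes X: "initial_space X nX"
    and hom: "\<forall>h\<in>X. \<forall>c. \<phi> (\<lambda>z. c * h z) = c * \<phi> h"
    and bdd: "\<forall>f\<in>X. nX f \<le> 1 \<longrightarrow> cmod (\<phi> f) \<le> B"
  shows "dual_norm X nX \<phi> \<le> B"
    and "h \<in> X \<Longrightarrow> cmod (\<phi> h) \<le> dual_norm X nX \<phi> * nX h"
proof -
  have ne: "{f\<in>X. nX f \<le> 1} \<noteq> {}" using zero_in_X[OF X] by auto
  have bd: "bdd_above ((\<lambda>f. cmod (\<phi> f)) ` {f\<in>X. nX f \<le> 1})"
    using bdd by (intro bdd_aboveI2[of _ _ B]) auto
  show "dual_norm X nX \<phi> \<le> B" unfolding dual_norm_def
    using ne bdd by (intro cSUP_least) auto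
  assume h: "h \<in> X"
  show "cmod (\<phi> h) \<le> dual_norm X nX \<phi> * nX h"
  proof (cases "nX h = 0")
    case True
    hence "h = (\<lambda>z. 0)" using X h unfolding initial_space_def by blast
    hence "(\<lambda>z. 0 * h z) = h" by simp
    hence "\<phi> h = 0 * \<phi> h" using hom h by metis
    thus ?thesis using True by simp
  next
    case False
    have pos: "nX h > 0" using False X h unfolding initial_space_def by force
    define c where "c = complex_of_real (1 / nX h)"
    define h' where "h' = (\<lambda>z. c * h z)"
    have h'X: "h' \<in> X" using X h unfolding initial_space_def h'_def by blast
    have "nX h' = cmod c * nX h" using X h unfolding initial_space_def h'_def by blast
    also have "\<dots> = 1" using pos by (simp add: c_def norm_divide)
    finally have "cmod (\<phi> h') \<le> dual_norm X nX \<phi>" unfolding dual_norm_def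
      using h'X by (intro cSUP_upper[OF _ bd]) auto
    moreover have "\<phi> h' = c * \<phi> h" using hom h unfolding h'_def by blast
    ultimately have "cmod (\<phi> h) / nX h \<le> dual_norm X nX \<phi>"
      using pos by (simp add: c_def norm_mult norm_divide)
    thus ?thesis using pos by (simp add: pos_divide_le_eq)
  qed
qed



lemma intr_add: "intrinsic T \<Longrightarrow> f \<in> Hol \<Longrightarrow> g \<in> Hol \<Longrightarrow> T (\<lambda>z. f z + g z) = (\<lambda>z. T f z + T g z)"
  unfolding intrinsic_def by blast
lemma intr_mult: "intrinsic T \<Longrightarrow> f \<in> Hol \<Longrightarrow> T (\<lambda>z. c * f z) = (\<lambda>z. c * T f z)"
  unfolding intrinsic_def by blast
lemma intr_Hol: "intrinsic T \<Longrightarrow> f \<in> Hol \<Longrightarrow> T f \<in> Hol"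
  unfolding intrinsic_def by blast

lemma is_sub: "initial_space X nX \<Longrightarrow> X \<subseteq> Hol" unfolding initial_space_def by blast
lemma is_add: "initial_space X nX \<Longrightarrow> f \<in> X \<Longrightarrow> g \<in> X \<Longrightarrow> (\<lambda>z. f z + g z) \<in> X"
  unfolding initial_space_def by blast
lemma is_mult: "initial_space X nX \<Longrightarrow> f \<in> X \<Longrightarrow> (\<lambda>z. c * f z) \<in> X"
  unfolding initial_space_def by blast
lemma is_nonneg: "initial_space X nX \<Longrightarrow> f \<in> X \<Longrightarrow> 0 \<le> nX f"
  unfolding initial_space_def by blast
lemma is_nmult: "initial_space X nX \<Longrightarrow> f \<in> X \<Longrightarrow> nX (\<lambda>z. c * f z) = cmod c * nX f"
  unfolding initial_space_def by blast
lemma is_tri: "initial_space X nX \<Longrightarrow> f \<in> X \<Longrightarrow> g \<in> X \<Longrightarrow> nX (\<lambda>z. f z + g z) \<le> nX f + nX g"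
  unfolding initial_space_def by blast
lemma is_subseq: "initial_space X nX \<Longrightarrow> \<forall>n. fs n \<in> X \<and> nX (fs n) \<le> 1 \<Longrightarrow>
    \<exists>(r::nat\<Rightarrow>nat) g. strict_mono r \<and> g \<in> X \<and> uc_conv (fs \<circ> r) g"
  unfolding initial_space_def by blast

lemma subseq_setup:
  fixes fs :: "nat \<Rightarrow> complex \<Rightarrow> complex"
  assumes X: "initial_space X nX" and T: "intrinsic T"
    and fs: "\<forall>n. fs n \<in> X \<and> nX (fs n) \<le> 1"
  obtains r g where "strict_mono r" "g \<in> X"
    "\<And>n. (\<lambda>z. fs (r n) z - g z) \<in> X"
    "\<And>n. 0 \<le> nX (\<lambda>z. fs (r n) z - g z) \<and> nX (\<lambda>z. fs (r n) z - g z) \<le> 1 + nX g"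
    "\<And>n. T (\<lambda>z. fs (r n) z - g z) = (\<lambda>z. T (fs (r n)) z - T g z)"
    "uc_conv (\<lambda>n. T (\<lambda>z. fs (r n) z - g z)) (\<lambda>z. 0)"
proof -
  obtain r g where r: "strict_mono r" and g: "g \<in> X" and uc: "uc_conv (fs \<circ> r) g"
    using is_subseq[OF X fs] by blast
  define h where "h n = (\<lambda>z. fs (r n) z - g z)" for n
  have XH: "X \<subseteq> Hol" using is_sub[OF X] .
  have mg: "(\<lambda>z. (-1) * g z) \<in> X" using is_mult[OF X g] .
  have fX: "fs (r n) \<in> X" for n using fs by blast
  have heq: "h n = (\<lambda>z. fs (r n) z + (\<lambda>z. (-1) * g z) z)" for n
    by (simp add: h_def)
  have hX: "h n \<in> X" for n
    unfolding heq by (rule is_add[OF X fX mg])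
  have hm: "0 \<le> nX (h n) \<and> nX (h n) \<le> 1 + nX g" for n
  proof -
    have "nX (h n) \<le> nX (fs (r n)) + nX (\<lambda>z. (-1) * g z)"
      unfolding heq by (rule is_tri[OF X fX mg])
    moreover have "nX (\<lambda>z. (-1) * g z) = cmod (-1) * nX g"
      by (rule is_nmult[OF X g])
    moreover have "0 \<le> nX (h n)" by (rule is_nonneg[OF X hX])
    moreover have "nX (fs (r n)) \<le> 1" using fs by blast
    ultimately show ?thesis by simp
  qed
  have Th: "T (h n) = (\<lambda>z. T (fs (r n)) z - T g z)" for n
  proof -
    have "T (h n) = (\<lambda>z. T (fs (r n)) z + T (\<lambda>z. (-1) * g z) z)"
      unfolding heq using intr_add[OF T] XH fX mg by blast
    moreover have "T (\<lambda>z. (-1) * g z) = (\<lambda>z. (-1) * T g z)"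
      using intr_mult[OF T] XH g by blast
    ultimately show ?thesis by simp
  qed
  have "uc_conv h (\<lambda>z. 0)"
    unfolding uc_conv_def uniform_limit_sequentially_iff
  proof (intro allI impI)
    fix K :: "complex set" and e :: real assume "compact K \<and> K \<subseteq> disk" "e > 0"
    then obtain N where N: "\<forall>n\<ge>N. \<forall>x\<in>K. dist ((fs \<circ> r) n x) (g x) < e"
      using uc unfolding uc_conv_def uniform_limit_sequentially_iff by blast
    show "\<exists>N. \<forall>n\<ge>N. \<forall>x\<in>K. dist (h n x) 0 < e"
      using N by (auto simp: h_def dist_norm)
  qed
  moreover have "\<forall>n. h n \<in> Hol" using hX XH by blast
  ultimately have "uc_conv (\<lambda>n. T (h n)) (\<lambda>z. 0)"
    using intrinsic_zero[OF T] by blast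
  show ?thesis
    by (rule that[OF r g hX[unfolded h_def] hm[unfolded h_def] Th[unfolded h_def]])
       (use \<open>uc_conv (\<lambda>n. T (h n)) (\<lambda>z. 0)\<close> in \<open>simp add: h_def\<close>)
qed


lemma tw_pos: "typical_weight v \<Longrightarrow> \<forall>z\<in>disk. 0 < v z \<and> v z \<le> 1"
  unfolding typical_weight_def by (elim conjE) assumption
lemma tw_tail: "typical_weight v \<Longrightarrow> \<forall>e>0. \<exists>r<1. \<forall>z\<in>disk. r < cmod z \<longrightarrow> v z < e"
  unfolding typical_weight_def by (elim conjE) assumption

lemma cball_disk:
  assumes r: "\<rho> < 1" shows "compact (cball (0::complex) \<rho>) \<and> cball 0 \<rho> \<subseteq> disk"
proof
  show "compact (cball (0::complex) \<rho>)" by (rule compact_cball)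
  show "cball 0 \<rho> \<subseteq> disk"
  proof
    fix x :: complex assume "x \<in> cball 0 \<rho>"
    hence "dist 0 x \<le> \<rho>" by (simp only: mem_cball)
    hence "dist 0 x < 1" using r by linarith
    thus "x \<in> disk" by (simp only: mem_ball)
  qed
qed

lemma uc_small:
  assumes "uc_conv F (\<lambda>z. 0)" "0 \<le> \<rho>" "\<rho> < 1" "e > 0"
  shows "\<exists>N. \<forall>n\<ge>N. \<forall>z. cmod z \<le> \<rho> \<longrightarrow> cmod (F n z) < e"
proof -
  have "uniform_limit (cball 0 \<rho>) F (\<lambda>z. 0) sequentially"
    using assms(1) cball_disk[OF assms(3)] unfolding uc_conv_def by blast
  then obtain N where N: "\<forall>n\<ge>N. \<forall>x\<in>cball 0 \<rho>. dist (F n x) 0 < e"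
    using assms unfolding uniform_limit_sequentially_iff by blast
  show ?thesis
  proof (intro exI[of _ N] allI impI)
    fix n z assume "n \<ge> N" "cmod z \<le> \<rho>"
    moreover hence "z \<in> cball 0 \<rho>" by simp
    ultimately show "cmod (F n z) < e" using N by (metis dist_0_norm dist_commute)
  qed
qed
lemma part_H:
  assumes v: "typical_weight v" and T: "intrinsic T" and X: "initial_space X nX"
    and bd: "bounded_op X nX (Hv v) (normHv v) T"
    and s0: "(\<lambda>N. sup_DN v (adj_eval_norm X nX T) N) \<longlonglongrightarrow> 0"
  shows "compact_op X nX (Hv v) (normHv v) T"
proof -
  have vpos: "\<forall>z\<in>disk. 0 < v z \<and> v z \<le> 1" using tw_pos[OF v] .
  obtain C0 where C0: "\<forall>f\<in>X. normHv v (T f) \<le> C0 * nX f" and TY: "\<forall>f\<in>X. T f \<in> Hv v"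
    using bd unfolding bounded_op_def by blast
  define C where "C = max C0 0"
  have XH: "X \<subseteq> Hol" using is_sub[OF X] .
  have hom: "\<forall>h\<in>X. \<forall>c. T (\<lambda>w. c * h w) z = c * T h z" for z
    using intr_mult[OF T] XH by auto
  have ballb: "cmod (T f z) \<le> C / v z" if z: "z\<in>disk" and f: "f\<in>X" "nX f \<le> 1" for z f
  proof -
    have "T f \<in> Hv v" using TY f by blast
    hence "bdd_above ((\<lambda>z. v z * cmod (T f z)) ` disk)" unfolding Hv_def by simp
    hence "v z * cmod (T f z) \<le> normHv v (T f)" unfolding normHv_def
      using z by (intro cSUP_upper) auto
    also have "\<dots> \<le> C0 * nX f" using C0 f by blast
    also have "\<dots> \<le> C"
    proof -
      have "0 \<le> nX f" using is_nonneg[OF X f(1)] .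
      hence "C0 * nX f \<le> C * nX f" unfolding C_def by (intro mult_right_mono) auto
      also have "\<dots> \<le> C * 1" using f \<open>0 \<le> nX f\<close> unfolding C_def by (intro mult_left_mono) auto
      finally show ?thesis by simp
    qed
    finally show ?thesis using vpos z by (simp add: pos_le_divide_eq mult.commute)
  qed
  have abd: "\<forall>z\<in>disk. v z * adj_eval_norm X nX T z \<le> C"
  proof
    fix z assume z: "z \<in> disk"
    have "adj_eval_norm X nX T z \<le> C / v z" unfolding adj_eval_norm_def
      using dual_bound(1)[OF X hom] ballb z by blast
    thus "v z * adj_eval_norm X nX T z \<le> C" using vpos z by (simp add: pos_le_divide_eq mult.commute)
  qed
  have Phia: "cmod (T h z) \<le> adj_eval_norm X nX T z * nX h" if "z \<in> disk" "h \<in> X" for z h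
    unfolding adj_eval_norm_def using dual_bound(2)[OF X hom, where B="C / v z" and h=h] ballb that by blast
  show ?thesis unfolding compact_op_def
  proof (intro allI impI)
    fix fs :: "nat \<Rightarrow> complex \<Rightarrow> complex" assume fs: "\<forall>n. fs n \<in> X \<and> nX (fs n) \<le> 1"
    obtain r g where r: "strict_mono r" and g: "g \<in> X"
      and hX: "\<And>n. (\<lambda>z. fs (r n) z - g z) \<in> X"
      and hm: "\<And>n. 0 \<le> nX (\<lambda>z. fs (r n) z - g z) \<and> nX (\<lambda>z. fs (r n) z - g z) \<le> 1 + nX g"
      and Th: "\<And>n. T (\<lambda>z. fs (r n) z - g z) = (\<lambda>z. T (fs (r n)) z - T g z)"
      and uc: "uc_conv (\<lambda>n. T (\<lambda>z. fs (r n) z - g z)) (\<lambda>z. 0)"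
      using subseq_setup[OF X T fs] by blast
    have "(\<lambda>n. SUP z\<in>disk. v z * cmod (T (\<lambda>z. fs (r n) z - g z) z)) \<longlonglongrightarrow> 0"
    proof (rule tail_lemma[OF vpos tw_tail[OF v] abd s0, where m = "\<lambda>n. nX (\<lambda>z. fs (r n) z - g z)"
          and M = "1 + nX g"])
      show "\<forall>n z. 0 \<le> cmod (T (\<lambda>z. fs (r n) z - g z) z)" by simp
      show "\<forall>n. 0 \<le> nX (\<lambda>z. fs (r n) z - g z) \<and> nX (\<lambda>z. fs (r n) z - g z) \<le> 1 + nX g"
        using hm by blast
      show "\<forall>n. \<forall>z\<in>disk. cmod (T (\<lambda>z. fs (r n) z - g z) z)
                \<le> adj_eval_norm X nX T z * nX (\<lambda>z. fs (r n) z - g z)"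
        using Phia hX by blast
      show "\<forall>\<rho>. 0 \<le> \<rho> \<longrightarrow> \<rho> < 1 \<longrightarrow> (\<forall>e>0. \<exists>N. \<forall>n\<ge>N. \<forall>z. cmod z \<le> \<rho> \<longrightarrow>
              cmod (T (\<lambda>z. fs (r n) z - g z) z) < e)"
        using uc_small[OF uc] by blast
    qed
    hence "(\<lambda>n. normHv v (\<lambda>z. T (fs (r n)) z - T g z)) \<longlonglongrightarrow> 0"
      unfolding normHv_def Th .
    thus "\<exists>(r::nat\<Rightarrow>nat) g. strict_mono r \<and> g \<in> Hv v \<and>
               (\<lambda>n. normHv v (\<lambda>z. T (fs (r n)) z - g z)) \<longlonglongrightarrow> 0"
      using r TY g by blast
  qed
qed

lemma deriv_small:
  assumes F: "\<forall>n. F n \<in> Hol" and uc: "uc_conv F (\<lambda>z. 0)"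
    and r: "0 \<le> \<rho>" "\<rho> < 1" and e: "e > 0"
  shows "\<exists>N. \<forall>n\<ge>N. \<forall>z. cmod z \<le> \<rho> \<longrightarrow> cmod (deriv (F n) z) < e"
proof -
  define R where "R = (1 + \<rho>) / 2"
  define \<delta> where "\<delta> = (1 - \<rho>) / 2"
  define B0 where "B0 = e * \<delta> / 2"
  have R: "0 \<le> R" "R < 1" and \<delta>: "\<delta> > 0" and B0: "B0 > 0"
    using r e by (auto simp: R_def \<delta>_def B0_def)
  obtain N where N: "\<forall>n\<ge>N. \<forall>w. cmod w \<le> R \<longrightarrow> cmod (F n w) < B0"
    using uc_small[OF uc R B0] by blast
  show ?thesis
  proof (intro exI[of _ N] allI impI)
    fix n z assume n: "n \<ge> N" and z: "cmod z \<le> \<rho>"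
    have sub: "cball z \<delta> \<subseteq> cball 0 R"
    proof
      fix w assume "w \<in> cball z \<delta>"
      hence "dist z w \<le> \<delta>" by (simp only: mem_cball)
      moreover have "dist 0 w \<le> dist 0 z + dist z w" by (rule dist_triangle)
      moreover have "dist 0 z = cmod z" by simp
      ultimately have "dist 0 w \<le> R" using z by (simp add: R_def \<delta>_def)
      thus "w \<in> cball 0 R" by (simp only: mem_cball)
    qed
    have sub2: "cball 0 R \<subseteq> disk" using cball_disk[OF R(2)] by blast
    have hol: "F n holomorphic_on disk" using F unfolding Hol_def by blast
    have hol1: "F n holomorphic_on ball z \<delta>"
      using hol sub sub2 ball_subset_cball by (meson holomorphic_on_subset subset_trans)
    have cont: "continuous_on (cball z \<delta>) (F n)"
      using holomorphic_on_imp_continuous_on[OF hol] sub sub2 by (meson continuous_on_subset subset_trans)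
    have fin: "F n w \<in> ball 0 B0" if "w \<in> ball z \<delta>" for w
    proof -
      have "w \<in> cball 0 R" using that sub ball_subset_cball by blast
      hence "cmod w \<le> R" by simp
      hence "cmod (F n w) < B0" using N n by blast
      thus ?thesis by simp
    qed
    have "cmod ((deriv ^^ (Suc 0)) (F n) z) \<le> fact (Suc 0) * B0 / \<delta> ^ (Suc 0)"
      using Cauchy_higher_deriv_bound[OF hol1 cont fin \<delta>, of "Suc 0"] by simp
    hence "cmod (deriv (F n) z) \<le> e / 2" using \<delta> by (simp add: B0_def)
    thus "cmod (deriv (F n) z) < e" using e by linarith
  qed
qed

lemma part_B:
  assumes v: "typical_weight v" and T: "intrinsic T" and X: "initial_space X nX"
    and bd: "bounded_op X nX (Bv v) (normBv v) T"
    and s0: "(\<lambda>N. sup_DN v (adj_deriv_eval_norm X nX T) N) \<longlonglongrightarrow> 0"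
  shows "compact_op X nX (Bv v) (normBv v) T"
proof -
  have vpos: "\<forall>z\<in>disk. 0 < v z \<and> v z \<le> 1" using tw_pos[OF v] .
  obtain C0 where C0: "\<forall>f\<in>X. normBv v (T f) \<le> C0 * nX f" and TY: "\<forall>f\<in>X. T f \<in> Bv v"
    using bd unfolding bounded_op_def by blast
  define C where "C = max C0 0"
  have XH: "X \<subseteq> Hol" using is_sub[OF X] .
  have hom: "\<forall>h\<in>X. \<forall>c. deriv (T (\<lambda>w. c * h w)) z = c * deriv (T h) z" if z: "z \<in> disk" for z
  proof (intro ballI allI)
    fix h c assume h: "h \<in> X"
    have hH: "h \<in> Hol" using h XH by blast
    have "T h \<in> Hol" using intr_Hol[OF T hH] .
    hence "T h holomorphic_on disk" unfolding Hol_def by blast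
    hence d: "T h field_differentiable (at z)"
      using z by (intro holomorphic_on_imp_differentiable_at) auto
    have "T (\<lambda>w. c * h w) = (\<lambda>w. c * T h w)" using intr_mult[OF T hH] .
    thus "deriv (T (\<lambda>w. c * h w)) z = c * deriv (T h) z" using deriv_cmult[OF d] by simp
  qed
  have ballb: "cmod (deriv (T f) z) \<le> C / v z" if z: "z\<in>disk" and f: "f\<in>X" "nX f \<le> 1" for z f
  proof -
    have "T f \<in> Bv v" using TY f by blast
    hence "bdd_above ((\<lambda>z. v z * cmod (deriv (T f) z)) ` disk)" unfolding Bv_def by simp
    hence "v z * cmod (deriv (T f) z) \<le> (SUP z\<in>disk. v z * cmod (deriv (T f) z))"
      using z by (intro cSUP_upper) auto
    also have "\<dots> \<le> normBv v (T f)" unfolding normBv_def by simp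
    also have "\<dots> \<le> C0 * nX f" using C0 f by blast
    also have "\<dots> \<le> C"
    proof -
      have "0 \<le> nX f" using is_nonneg[OF X f(1)] .
      hence "C0 * nX f \<le> C * nX f" unfolding C_def by (intro mult_right_mono) auto
      also have "\<dots> \<le> C * 1" using f \<open>0 \<le> nX f\<close> unfolding C_def by (intro mult_left_mono) auto
      finally show ?thesis by simp
    qed
    finally show ?thesis using vpos z by (simp add: pos_le_divide_eq mult.commute)
  qed
  have abd: "\<forall>z\<in>disk. v z * adj_deriv_eval_norm X nX T z \<le> C"
  proof
    fix z assume z: "z \<in> disk"
    have "adj_deriv_eval_norm X nX T z \<le> C / v z" unfolding adj_deriv_eval_norm_def
      using dual_bound(1)[OF X hom[OF z]] ballb z by blast
    thus "v z * adj_deriv_eval_norm X nX T z \<le> C" using vpos z by (simp add: pos_le_divide_eq mult.commute)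
  qed
  have Phia: "cmod (deriv (T h) z) \<le> adj_deriv_eval_norm X nX T z * nX h" if "z \<in> disk" "h \<in> X" for z h
    unfolding adj_deriv_eval_norm_def
    using dual_bound(2)[OF X hom[OF that(1)], where B="C / v z" and h=h] ballb that by blast
  show ?thesis unfolding compact_op_def
  proof (intro allI impI)
    fix fs :: "nat \<Rightarrow> complex \<Rightarrow> complex" assume fs: "\<forall>n. fs n \<in> X \<and> nX (fs n) \<le> 1"
    obtain r g where r: "strict_mono r" and g: "g \<in> X"
      and hX: "\<And>n. (\<lambda>z. fs (r n) z - g z) \<in> X"
      and hm: "\<And>n. 0 \<le> nX (\<lambda>z. fs (r n) z - g z) \<and> nX (\<lambda>z. fs (r n) z - g z) \<le> 1 + nX g"
      and Th: "\<And>n. T (\<lambda>z. fs (r n) z - g z) = (\<lambda>z. T (fs (r n)) z - T g z)"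
      and uc: "uc_conv (\<lambda>n. T (\<lambda>z. fs (r n) z - g z)) (\<lambda>z. 0)"
      using subseq_setup[OF X T fs] by blast
    have THol: "\<forall>n. T (\<lambda>z. fs (r n) z - g z) \<in> Hol"
      using intr_Hol[OF T] hX XH by blast
    have L1: "(\<lambda>n. SUP z\<in>disk. v z * cmod (deriv (T (\<lambda>z. fs (r n) z - g z)) z)) \<longlonglongrightarrow> 0"
    proof (rule tail_lemma[OF vpos tw_tail[OF v] abd s0, where m = "\<lambda>n. nX (\<lambda>z. fs (r n) z - g z)"
          and M = "1 + nX g"])
      show "\<forall>n z. 0 \<le> cmod (deriv (T (\<lambda>z. fs (r n) z - g z)) z)" by simp
      show "\<forall>n. 0 \<le> nX (\<lambda>z. fs (r n) z - g z) \<and> nX (\<lambda>z. fs (r n) z - g z) \<le> 1 + nX g"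
        using hm by blast
      show "\<forall>n. \<forall>z\<in>disk. cmod (deriv (T (\<lambda>z. fs (r n) z - g z)) z)
                \<le> adj_deriv_eval_norm X nX T z * nX (\<lambda>z. fs (r n) z - g z)"
        using Phia hX by blast
      show "\<forall>\<rho>. 0 \<le> \<rho> \<longrightarrow> \<rho> < 1 \<longrightarrow> (\<forall>e>0. \<exists>N. \<forall>n\<ge>N. \<forall>z. cmod z \<le> \<rho> \<longrightarrow>
              cmod (deriv (T (\<lambda>z. fs (r n) z - g z)) z) < e)"
        using deriv_small[OF THol uc] by blast
    qed
    have L0: "(\<lambda>n. cmod (T (\<lambda>z. fs (r n) z - g z) 0)) \<longlonglongrightarrow> 0"
    proof (rule LIMSEQ_I)
      fix e :: real assume "e > 0"
      then obtain N where "\<forall>n\<ge>N. \<forall>z. cmod z \<le> 0 \<longrightarrow> cmod (T (\<lambda>z. fs (r n) z - g z) z) < e"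
        using uc_small[OF uc, of 0 e] by auto
      thus "\<exists>no. \<forall>n\<ge>no. norm (cmod (T (\<lambda>z. fs (r n) z - g z) 0) - 0) < e" by auto
    qed
    have "(\<lambda>n. normBv v (T (\<lambda>z. fs (r n) z - g z))) \<longlonglongrightarrow> 0"
      unfolding normBv_def by (rule tendsto_add_zero[OF L0 L1])
    hence "(\<lambda>n. normBv v (\<lambda>z. T (fs (r n)) z - T g z)) \<longlonglongrightarrow> 0"
      unfolding Th .
    thus "\<exists>(r::nat\<Rightarrow>nat) g. strict_mono r \<and> g \<in> Bv v \<and>
               (\<lambda>n. normBv v (\<lambda>z. T (fs (r n)) z - g z)) \<longlonglongrightarrow> 0"
      using r TY g by blast
  qed
qed


theorem proposition3p1:
  fixes v :: "complex \<Rightarrow> real"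
    and T :: "(complex \<Rightarrow> complex) \<Rightarrow> (complex \<Rightarrow> complex)"
    and X :: "(complex \<Rightarrow> complex) set"
    and nX :: "(complex \<Rightarrow> complex) \<Rightarrow> real"
  assumes "typical_weight v"
    and "intrinsic T"
    and "initial_space X nX"
  shows "(bounded_op X nX (Hv v) (normHv v) T \<and>
          (\<lambda>N. sup_DN v (adj_eval_norm X nX T) N) \<longlonglongrightarrow> 0
            \<longrightarrow> compact_op X nX (Hv v) (normHv v) T)
       \<and> (bounded_op X nX (Bv v) (normBv v) T \<and>
          (\<lambda>N. sup_DN v (adj_deriv_eval_norm X nX T) N) \<longlonglongrightarrow> 0
            \<longrightarrow> compact_op X nX (Bv v) (normBv v) T)"
    using part_H[OF assms] part_B[OF assms] by blast

end
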